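(* Under the standing assumptions on $f$, let $\ell>0$, $\beta=\ell d$, let $x_1,\dots,x_d$ be i.i.d. with density $f^\beta/N(\beta)$ and, independently, $y_1,\dots,y_d$ i.i.d. $N(0,(\beta|H|)^{-1})$. Define the Taylor remainder $$R(z):=h(z)-h(0)-\frac{H}{2}z^2-\frac{h'''(0)}{6}z^3-\frac{h''''(0)}{24}z^4$$ (so $R(z)=\frac{z^5}{120}h^{(5)}(\xi_z)$ for some $\xi_z$ between $0$ and $z$). Then $$T_2(d):=\beta\sum_{i=1}^d\big(R(y_i)-R(x_i)\big)\to0\quad\text{in probability as }d\to\infty.$$
   Context: Standing assumptions: $f:\mathbb{R}\to(0,\infty)$ is an unnormalised univariate density with $f\in C^5$, $f(0)=1$, $f'(0)=0$, and $0$ is the unique global maximiser of $f$. Let $h:=\log f$ and $H:=h''(0)$, assumed $H<0$; there is $L>0$ with $|h^{(5)}(x)|<L$ for all $x\in\mathbb{R}$. Polynomial tails: there exist $\gamma,M,K>0$ with $\sup_{|x|>M} f(x)|x|^{\gamma}<K$. Dutchman's cap condition: there exists $\delta_2\in(0,M)$ such that $f(x)\le\exp(-x^2|H|/4)$ for $|x|<\delta_2$ and $f(x)\le\exp(-\delta_2^2|H|/4)$ for $\delta_2\le|x|\le M$. Normalisation: $N(\beta):=\int_{\mathbb{R}}f(x)^\beta\,dx$. *)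

theory Defs
  imports "HOL-Probability.Probability"
begin

definition Cn :: "nat \<Rightarrow> (real \<Rightarrow> real) \<Rightarrow> bool" where
  "Cn n g \<longleftrightarrow>
     (\<forall>k<n. \<forall>x. ((deriv ^^ k) g has_real_derivative (deriv ^^ Suc k) g x) (at x))
     \<and> continuous_on UNIV ((deriv ^^ n) g)"

definition Nf :: "(real \<Rightarrow> real) \<Rightarrow> real \<Rightarrow> real" where
  "Nf f \<beta> = (\<integral>x. f x powr \<beta> \<partial>lborel)"

definition Rem :: "(real \<Rightarrow> real) \<Rightarrow> real \<Rightarrow> real" where
  "Rem f z = (let h = (\<lambda>x. ln (f x)) in
      h z - h 0 - (deriv ^^ 2) h 0 / 2 * z ^ 2 - (deriv ^^ 3) h 0 / 6 * z ^ 3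
        - (deriv ^^ 4) h 0 / 24 * z ^ 4)"

definition joint_law :: "(real \<Rightarrow> real) \<Rightarrow> real \<Rightarrow> real \<Rightarrow> nat
    \<Rightarrow> ((nat \<Rightarrow> real) \<times> (nat \<Rightarrow> real)) measure" where
  "joint_law f H \<beta> d =
     (PiM {..<d} (\<lambda>_. density lborel (\<lambda>x. ennreal (f x powr \<beta> / Nf f \<beta>))))
     \<Otimes>\<^sub>M
     (PiM {..<d} (\<lambda>_. density lborel (\<lambda>x. ennreal (normal_density 0 (1 / sqrt (\<beta> * \<bar>H\<bar>)) x))))"

end

theory Submission
  imports Defs "HOL-Real_Asymp.Real_Asymp"
begin


definition Dn :: "nat \<Rightarrow> (real\<Rightarrow>real) \<Rightarrow> bool" where
  "Dn n g \<longleftrightarrow> (\<forall>k<n. \<forall>x. ((deriv^^k) g has_real_derivative (deriv^^Suc k) g x) (at x))"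

lemma Dn_0[simp]: "Dn 0 g" by (simp add: Dn_def)

lemma Dn_Suc: "Dn (Suc n) g \<longleftrightarrow> (\<forall>x. (g has_real_derivative deriv g x) (at x)) \<and> Dn n (deriv g)"
proof -
  have e: "(deriv^^Suc k) g = (deriv^^k) (deriv g)" for k by (simp add: funpow_Suc_right del: funpow.simps)
  show ?thesis unfolding Dn_def
    apply (auto simp: e less_Suc_eq_0_disj simp del: funpow.simps)
    done
qed

lemma Dn_mono: "m \<le> n \<Longrightarrow> Dn n g \<Longrightarrow> Dn m g" by (auto simp: Dn_def)

lemma Dn_add: "Dn n f \<Longrightarrow> Dn n g \<Longrightarrow> Dn n (\<lambda>x. f x + g x)"
proof (induction n arbitrary: f g)
  case (Suc n)
  then have df: "\<And>x. (f has_real_derivative deriv f x) (at x)" and dg: "\<And>x. (g has_real_derivative deriv g x) (at x)"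
    by (auto simp: Dn_Suc)
  have d: "deriv (\<lambda>x. f x + g x) = (\<lambda>x. deriv f x + deriv g x)"
    by (rule ext, rule DERIV_imp_deriv, intro derivative_intros df dg)
  show ?case unfolding Dn_Suc d using Suc by (auto simp: Dn_Suc intro!: derivative_eq_intros df dg)
qed simp

lemma Dn_const: "Dn n (\<lambda>x. c)"
proof (induction n arbitrary: c)
  case (Suc n)
  have d: "deriv (\<lambda>x. c) = (\<lambda>x. 0)" by auto
  show ?case unfolding Dn_Suc d using Suc by auto
qed simp

lemma Dn_mult: "Dn n f \<Longrightarrow> Dn n g \<Longrightarrow> Dn n (\<lambda>x. f x * g x)"
proof (induction n arbitrary: f g)
  case (Suc n)
  then have df: "\<And>x. (f has_real_derivative deriv f x) (at x)" and dg: "\<And>x. (g has_real_derivative deriv g x) (at x)"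
    by (auto simp: Dn_Suc)
  have d: "deriv (\<lambda>x. f x * g x) = (\<lambda>x. deriv f x * g x + f x * deriv g x)"
    by (rule ext, rule DERIV_imp_deriv, auto intro!: derivative_eq_intros df dg)
  have "Dn n (deriv f)" "Dn n (deriv g)" "Dn n f" "Dn n g" using Suc.prems by (auto simp: Dn_Suc intro: Dn_mono[of n "Suc n"])
  then show ?case unfolding Dn_Suc d
    by (auto intro!: derivative_eq_intros df dg Dn_add Suc.IH)
qed simp

lemma Dn_inverse: assumes "\<And>x. f x > 0" shows "Dn n f \<Longrightarrow> Dn n (\<lambda>x. 1 / f x)"
proof (induction n)
  case (Suc n)
  then have df: "\<And>x. (f has_real_derivative deriv f x) (at x)" by (auto simp: Dn_Suc)
  have fnz: "\<And>x. f x \<noteq> 0" using assms by (metis less_irrefl)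
  have d: "deriv (\<lambda>x. 1 / f x) = (\<lambda>x. (-1) * deriv f x * ((1 / f x) * (1 / f x)))"
    by (rule ext, rule DERIV_imp_deriv) (use fnz in \<open>auto intro!: derivative_eq_intros df simp: field_simps power2_eq_square\<close>)
  have "Dn n (deriv f)" "Dn n f" using Suc.prems by (auto simp: Dn_Suc intro: Dn_mono[of n "Suc n"])
  then have "Dn n (\<lambda>x. 1/f x)" using Suc.IH by simp
  then have "Dn n (\<lambda>x. (-1) * deriv f x * ((1 / f x) * (1 / f x)))"
    by (intro Dn_mult Dn_const \<open>Dn n (deriv f)\<close>)
  moreover have "(\<lambda>x. 1 / f x) = (\<lambda>x. inverse (f x))" by (simp add: field_simps)
  moreover have "\<And>x. f x \<noteq> 0" using assms by (metis less_irrefl)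
  ultimately show ?case unfolding Dn_Suc d
    by (auto intro!: derivative_eq_intros df simp: field_simps power2_eq_square)
qed simp

lemma Dn_ln: assumes "\<And>x. f x > 0" and "Dn n f" shows "Dn n (\<lambda>x. ln (f x))"
proof (cases n)
  case (Suc m)
  then have df: "\<And>x. (f has_real_derivative deriv f x) (at x)" using assms by (auto simp: Dn_Suc)
  have d: "deriv (\<lambda>x. ln (f x)) = (\<lambda>x. deriv f x * (1 / f x))"
    by (rule ext, rule DERIV_imp_deriv) (use assms in \<open>auto intro!: derivative_eq_intros df simp: field_simps\<close>)
  have "Dn m (deriv f)" "Dn m f" using assms Suc by (auto simp: Dn_Suc intro: Dn_mono[of m "Suc m"])
  then have "Dn m (\<lambda>x. deriv f x * (1 / f x))"
    by (intro Dn_mult Dn_inverse assms)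
  moreover have "\<And>x. f x \<noteq> 0" using assms by (metis less_irrefl)
  ultimately show ?thesis unfolding Suc Dn_Suc d using assms
    by (auto intro!: derivative_eq_intros df)
qed simp




lemma taylor_h:
  fixes h :: "real \<Rightarrow> real"
  assumes "Dn 5 h"
  shows "\<exists>t. \<bar>t\<bar> \<le> \<bar>z\<bar> \<and> h z = h 0 + deriv h 0 * z + (deriv^^2) h 0 / 2 * z^2 + (deriv^^3) h 0 / 6 * z^3
          + (deriv^^4) h 0 / 24 * z^4 + (deriv^^5) h t / 120 * z^5"
proof -
  have "\<exists>t. \<bar>t\<bar> \<le> \<bar>z\<bar> \<and> h z = (\<Sum>m<5. (deriv^^m) h 0 / (fact m) * z ^ m) + (deriv^^5) h t / (fact 5) * z ^ 5"
    by (rule Maclaurin_bi_le) (use assms in \<open>auto simp: Dn_def\<close>)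
  then obtain t where t: "\<bar>t\<bar> \<le> \<bar>z\<bar>" "h z = (\<Sum>m<5. (deriv^^m) h 0 / (fact m) * z ^ m) + (deriv^^5) h t / (fact 5) * z ^ 5" by blast
  have f: "fact 2 = (2::real)" "fact 3 = (6::real)" "fact 4 = (24::real)" "fact 5 = (120::real)"
    by (simp_all add: fact_numeral)
  show ?thesis using t by (intro exI[of _ t]) (simp add: numeral_eq_Suc f)
qed




lemma nn_integral_reflect:
  assumes "g \<in> borel_measurable borel"
  shows "(\<integral>\<^sup>+x. g (-x) \<partial>lborel) = (\<integral>\<^sup>+x. g x \<partial>(lborel::real measure))"
proof -
  have "(\<integral>\<^sup>+x. g x \<partial>(lborel::real measure)) = (\<integral>\<^sup>+x. g x \<partial>distr lborel borel uminus)"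
    by (simp add: lborel_distr_uminus)
  also have "\<dots> = (\<integral>\<^sup>+x. g (-x) \<partial>lborel)"
    using assms by (subst nn_integral_distr) auto
  finally show ?thesis by simp
qed

lemma nn_integral_powr_tail:
  fixes R :: real assumes "R > 0"
  shows "(\<integral>\<^sup>+x. ennreal (x powr -2) * indicator {R..} x \<partial>lborel) = ennreal (1/R)"
proof -
  have "((\<lambda>x. x powr -2) has_integral -(R powr (-2+1)) / (-2+1)) {R..}"
    by (rule has_integral_powr_to_inf) (use assms in auto)
  then have "((\<lambda>x. x powr -2) has_integral 1/R) {R..}"
    using assms by (simp add: powr_minus_divide)
  then show ?thesis
    by (intro nn_integral_has_integral_lebesgue') auto
qed

lemma nn_integral_abs_powr_tail:
  fixes R :: real assumes "R > 0"
  shows "(\<integral>\<^sup>+x. ennreal (\<bar>x\<bar> powr -2) * indicator {x. R \<le> \<bar>x\<bar>} x \<partial>lborel) = ennreal (2/R)"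
proof -
  let ?g = "\<lambda>x::real. ennreal (x powr -2) * indicator {R..} x"
  have eq: "ennreal (\<bar>x\<bar> powr -2) * indicator {x. R \<le> \<bar>x\<bar>} x = ?g x + ?g (-x)" for x
    using assms by (auto split: split_indicator)
  have "(\<integral>\<^sup>+x. ennreal (\<bar>x\<bar> powr -2) * indicator {x. R \<le> \<bar>x\<bar>} x \<partial>lborel) =
      (\<integral>\<^sup>+x. ?g x \<partial>lborel) + (\<integral>\<^sup>+x. ?g (-x) \<partial>lborel)"
    unfolding eq by (rule nn_integral_add) auto
  also have "(\<integral>\<^sup>+x. ?g (-x) \<partial>lborel) = (\<integral>\<^sup>+x. ?g x \<partial>lborel)"
    by (rule nn_integral_reflect) auto
  moreover have "ennreal (1/R) + ennreal (1/R) = ennreal (2/R)"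
    using assms by (subst ennreal_plus[symmetric]) auto
  ultimately show ?thesis using nn_integral_powr_tail[OF assms] by simp
qed




lemma normal_abs5:
  assumes "\<sigma> > 0"
  shows "(\<integral>\<^sup>+x. ennreal (normal_density 0 \<sigma> x * \<bar>x\<bar>^5) \<partial>lborel) = ennreal (8 * \<sigma>^5 * sqrt (2/pi))"
proof -
  have hb: "has_bochner_integral lborel (\<lambda>x. normal_density 0 \<sigma> x * \<bar>x - 0\<bar>^(2*2+1)) (2^2 * \<sigma>^(2*2+1) * fact 2 * sqrt (2 / pi))"
    by (rule normal_moment_abs_odd) (use assms in auto)
  then have hb': "has_bochner_integral lborel (\<lambda>x. normal_density 0 \<sigma> x * \<bar>x\<bar>^5) (8 * \<sigma>^5 * sqrt (2/pi))"
    by (simp add: numeral_eq_Suc)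
  show ?thesis
    using nn_integral_eq_integral[OF integrable.intros[OF hb']]
      has_bochner_integral_integral_eq[OF hb'] by simp
qed

lemma gauss_abs5:
  assumes "a > 0"
  shows "(\<integral>\<^sup>+x. ennreal (exp (-a*x^2) * \<bar>x\<bar>^5) \<partial>lborel) = ennreal (2/a^3)"
proof -
  define s where "s = sqrt (2*a)"
  define \<sigma> where "\<sigma> = 1/s"
  have s: "s > 0" "s^2 = 2*a" using assms by (auto simp: s_def)
  have sg: "\<sigma> > 0" using s by (simp add: \<sigma>_def)
  have c: "sqrt (2*pi*\<sigma>^2) = sqrt (2*pi) * \<sigma>" using sg by (simp add: real_sqrt_mult)
  have e: "exp (-a*x^2) * \<bar>x\<bar>^5 = sqrt (2*pi) * \<sigma> * (normal_density 0 \<sigma> x * \<bar>x\<bar>^5)" for x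
  proof -
    have "-(x - 0)\<^sup>2 / (2 * \<sigma>\<^sup>2) = -a*x^2" using s by (simp add: \<sigma>_def field_simps)
    then show ?thesis unfolding normal_density_def c using sg by (simp add: field_simps)
  qed
  have "(\<integral>\<^sup>+x. ennreal (exp (-a*x^2) * \<bar>x\<bar>^5) \<partial>lborel)
       = (\<integral>\<^sup>+x. ennreal (sqrt (2*pi) * \<sigma>) * ennreal (normal_density 0 \<sigma> x * \<bar>x\<bar>^5) \<partial>lborel)"
    unfolding e using sg by (simp add: ennreal_mult)
  also have "\<dots> = ennreal (sqrt (2*pi) * \<sigma>) * ennreal (8 * \<sigma>^5 * sqrt (2/pi))"
    by (subst nn_integral_cmult) (auto simp: normal_abs5[OF sg])
  also have "\<dots> = ennreal (sqrt (2*pi) * \<sigma> * (8 * \<sigma>^5 * sqrt (2/pi)))"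
    using sg by (simp add: ennreal_mult)
  also have "sqrt (2*pi) * \<sigma> * (8 * \<sigma>^5 * sqrt (2/pi)) = 8 * \<sigma>^6 * (sqrt (2*pi) * sqrt (2/pi))"
    by (simp add: eval_nat_numeral algebra_simps)
  also have "sqrt (2*pi) * sqrt (2/pi) = 2"
    by (simp add: real_sqrt_mult[symmetric])
  also have "8 * \<sigma>^6 * 2 = 2/a^3"
  proof -
    have "\<sigma>^6 = 1 / (s^2)^3" by (simp add: \<sigma>_def power_mult[symmetric] power_one_over)
    then show ?thesis using s assms by (simp add: field_simps)
  qed
  finally show ?thesis .
qed




locale fsetting =
  fixes f :: "real \<Rightarrow> real" and A a \<delta> M K \<gamma> :: real
  assumes fpos: "\<And>x. 0 < f x" and fcont: "continuous_on UNIV f"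
    and flt1: "\<And>x. x \<noteq> 0 \<Longrightarrow> f x < 1" and f0: "f 0 = 1"
    and Apos: "A > 0" and Alow: "\<And>x. \<bar>x\<bar> \<le> 1 \<Longrightarrow> -A*x^2 \<le> ln (f x)"
    and apos: "a > 0" and dpos: "\<delta> > 0" and gauss: "\<And>x. \<bar>x\<bar> < \<delta> \<Longrightarrow> f x \<le> exp (-a*x^2)"
    and gpos: "\<gamma> > 0" and Mpos: "M > 0" and Kpos: "K > 0"
    and tail: "\<And>x. \<bar>x\<bar> > M \<Longrightarrow> f x * \<bar>x\<bar> powr \<gamma> \<le> K"
begin

lemma fle1: "f x \<le> 1"
  using flt1[of x] f0 by (cases "x = 0") auto

lemma f_meas[measurable]: "f \<in> borel_measurable borel"
  using fcont by (intro borel_measurable_continuous_onI) auto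

definition R where "R = max (M+1) ((2*K) powr (1/\<gamma>))"

lemma R: "R \<ge> 1" "R > M" "R > 0" using Mpos by (auto simp: R_def)

lemma tail_le: assumes "\<bar>x\<bar> > M" shows "f x \<le> K * \<bar>x\<bar> powr (-\<gamma>)"
proof -
  have "\<bar>x\<bar> powr \<gamma> > 0" using assms Mpos by auto
  with tail[OF assms] show ?thesis by (simp add: powr_minus field_simps)
qed

lemma f_half: assumes "\<bar>x\<bar> \<ge> R" shows "f x \<le> 1/2"
proof -
  have xM: "\<bar>x\<bar> > M" using assms R by auto
  have "2*K = ((2*K) powr (1/\<gamma>)) powr \<gamma>" using gpos Kpos by (simp add: powr_powr)
  also have "\<dots> \<le> \<bar>x\<bar> powr \<gamma>"
    using assms gpos by (intro powr_mono2) (auto simp: R_def)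
  finally have "2*K \<le> \<bar>x\<bar> powr \<gamma>" .
  moreover have "f x * \<bar>x\<bar> powr \<gamma> \<le> K" by (rule tail[OF xM])
  moreover have "f x > 0" by (rule fpos)
  ultimately have "f x * (2*K) \<le> K" by (meson mult_left_mono order_trans less_imp_le)
  then show ?thesis using Kpos by (simp add: field_simps)
qed

lemma exists_q: "\<exists>q. 0 < q \<and> q < 1 \<and> (\<forall>x. \<delta> \<le> \<bar>x\<bar> \<longrightarrow> f x \<le> q)"
proof -
  define c where "c = min \<delta> R"
  have c: "c > 0" "c \<le> R" using dpos R by (auto simp: c_def)
  define S where "S = {-R..-c} \<union> {c..R}"
  have "compact S" unfolding S_def by (intro compact_Un compact_Icc)
  moreover have "R \<in> S" using c by (auto simp: S_def)
  ultimately obtain x0 where x0: "x0 \<in> S" "\<And>y. y \<in> S \<Longrightarrow> f y \<le> f x0"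
    using continuous_attains_sup[of S f] continuous_on_subset[OF fcont] by blast
  have "x0 \<noteq> 0" using x0(1) c by (auto simp: S_def)
  then have fx0: "f x0 < 1" by (rule flt1)
  define q where "q = max (1/2) (f x0)"
  have "f x \<le> q" if "\<delta> \<le> \<bar>x\<bar>" for x
  proof (cases "\<bar>x\<bar> \<ge> R")
    case True then show ?thesis using f_half[OF True] by (simp add: q_def le_max_iff_disj)
  next
    case False
    then have "x \<in> S" using that by (auto simp: S_def c_def)
    then show ?thesis using x0(2)[of x] by (simp add: q_def le_max_iff_disj)
  qed
  then show ?thesis using fx0 by (intro exI[of _ q]) (auto simp: q_def)
qed

definition p where "p = max 1 (7/\<gamma>)"

lemma p: "p \<ge> 1" "\<gamma> * p \<ge> 7"
proof -
  show "p \<ge> 1" by (simp add: p_def)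
  have "7/\<gamma> \<le> p" by (simp add: p_def)
  then show "\<gamma> * p \<ge> 7" using gpos by (simp add: field_simps)
qed

lemma J_pt: "f x powr p * (1+\<bar>x\<bar>^5) \<le> (1+R^5) * indicator {-R..R} x + 2*K powr p * (\<bar>x\<bar> powr -2 * indicator {x. R \<le> \<bar>x\<bar>} x)"
proof (cases "\<bar>x\<bar> \<le> R")
  case True
  have "f x powr p \<le> 1 powr p" using fle1[of x] fpos[of x] p by (intro powr_mono2) auto
  then have "f x powr p \<le> 1" by simp
  moreover have "\<bar>x\<bar>^5 \<le> R^5" using True by (intro power_mono) auto
  ultimately have "f x powr p * (1+\<bar>x\<bar>^5) \<le> 1 * (1+R^5)"
    by (intro mult_mono) auto
  moreover have "0 \<le> 2*K powr p * (\<bar>x\<bar> powr -2 * indicator {x. R \<le> \<bar>x\<bar>} x)" by auto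
  moreover have ind: "indicator {-R..R} x = (1::real)" using True by (auto simp: abs_le_iff)
  ultimately show ?thesis unfolding ind by linarith
next
  case False
  then have xR: "\<bar>x\<bar> > R" "\<bar>x\<bar> > M" "\<bar>x\<bar> \<ge> 1" using R by auto
  have "f x powr p \<le> (K * \<bar>x\<bar> powr (-\<gamma>)) powr p"
    using tail_le[OF xR(2)] fpos[of x] p by (intro powr_mono2) auto
  also have "\<dots> = K powr p * \<bar>x\<bar> powr (-\<gamma>*p)"
    using Kpos by (simp add: powr_mult powr_powr)
  finally have a1: "f x powr p \<le> K powr p * \<bar>x\<bar> powr (-\<gamma>*p)" .
  have "1 + \<bar>x\<bar>^5 \<le> 2 * \<bar>x\<bar> powr 5"
  proof -
    have "1 \<le> \<bar>x\<bar>^5" using xR by (simp add: one_le_power)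
    moreover have "\<bar>x\<bar> powr 5 = \<bar>x\<bar>^5" using xR by (simp add: powr_realpow)
    ultimately show ?thesis by simp
  qed
  then have "f x powr p * (1+\<bar>x\<bar>^5) \<le> K powr p * \<bar>x\<bar> powr (-\<gamma>*p) * (2 * \<bar>x\<bar> powr 5)"
    using a1 by (intro mult_mono) auto
  also have "\<dots> = 2 * K powr p * (\<bar>x\<bar> powr 5 * \<bar>x\<bar> powr (-\<gamma>*p))"
    by (simp only: mult_ac)
  also have "\<bar>x\<bar> powr 5 * \<bar>x\<bar> powr (-\<gamma>*p) = \<bar>x\<bar> powr (5 - \<gamma>*p)"
    by (subst powr_add[symmetric]) simp
  also have "2 * K powr p * \<bar>x\<bar> powr (5 - \<gamma>*p) \<le> 2 * K powr p * \<bar>x\<bar> powr -2"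
    using p xR by (intro mult_left_mono powr_mono) auto
  finally have "f x powr p * (1+\<bar>x\<bar>^5) \<le> 2 * K powr p * \<bar>x\<bar> powr -2" .
  moreover have "indicator {x. R \<le> \<bar>x\<bar>} x = (1::real)" using xR by auto
  moreover have "0 \<le> (1+R^5) * indicator {-R..R} x" using R by auto
  ultimately show ?thesis by simp
qed

lemma J_fin: "(\<integral>\<^sup>+x. ennreal (f x powr p * (1+\<bar>x\<bar>^5)) \<partial>lborel) < \<infinity>"
proof -
  have "(\<integral>\<^sup>+x. ennreal (f x powr p * (1+\<bar>x\<bar>^5)) \<partial>lborel) \<le>
      (\<integral>\<^sup>+x. ennreal ((1+R^5) * indicator {-R..R} x) + ennreal (2*K powr p) * (ennreal (\<bar>x\<bar> powr -2) * indicator {x. R \<le> \<bar>x\<bar>} x) \<partial>lborel)"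
  proof (intro nn_integral_mono)
    fix x
    have "ennreal (f x powr p * (1+\<bar>x\<bar>^5)) \<le> ennreal ((1+R^5) * indicator {-R..R} x + 2*K powr p * (\<bar>x\<bar> powr -2 * indicator {x. R \<le> \<bar>x\<bar>} x))"
      using J_pt by (rule ennreal_leI)
    also have "\<dots> = ennreal ((1+R^5) * indicator {-R..R} x) + ennreal (2*K powr p) * (ennreal (\<bar>x\<bar> powr -2) * indicator {x. R \<le> \<bar>x\<bar>} x)"
      using R by (subst ennreal_plus) (auto simp: ennreal_mult[symmetric] ennreal_indicator[symmetric] simp del: ennreal_indicator split: split_indicator)
    finally show "ennreal (f x powr p * (1+\<bar>x\<bar>^5)) \<le> \<dots>" .
  qed
  also have "\<dots> = (\<integral>\<^sup>+x. ennreal ((1+R^5) * indicator {-R..R} x) \<partial>lborel) + ennreal (2*K powr p) * (\<integral>\<^sup>+x. ennreal (\<bar>x\<bar> powr -2) * indicator {x. R \<le> \<bar>x\<bar>} x \<partial>lborel)"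
    by (subst nn_integral_add) (auto simp: nn_integral_cmult)
  also have "(\<integral>\<^sup>+x. ennreal (\<bar>x\<bar> powr -2) * indicator {x. R \<le> \<bar>x\<bar>} x \<partial>lborel) = ennreal (2/R)"
    using R by (intro nn_integral_abs_powr_tail) auto
  also have "(\<integral>\<^sup>+x. ennreal ((1+R^5) * indicator {-R..R} x) \<partial>lborel) = ennreal (1+R^5) * ennreal (2*R)"
  proof -
    have e: "\<And>x. ennreal ((1+R^5) * indicator {-R..R} x) = ennreal (1+R^5) * indicator {-R..R} x"
      by (auto split: split_indicator)
    have "emeasure lborel {-R..R} = ennreal (2*R)" using R by simp
    then show ?thesis unfolding e by (subst nn_integral_cmult_indicator) auto
  qed
  also have "ennreal (1 + R ^ 5) * ennreal (2 * R) + ennreal (2 * K powr p) * ennreal (2 / R)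
     = ennreal ((1 + R ^ 5) * (2 * R) + (2 * K powr p) * (2 / R))"
    using R by (simp add: ennreal_mult[symmetric] ennreal_plus[symmetric] del: ennreal_plus)
  finally show ?thesis using le_less_trans by fastforce
qed

definition J where "J = enn2real (\<integral>\<^sup>+x. ennreal (f x powr p * (1+\<bar>x\<bar>^5)) \<partial>lborel)"

lemma J_eq: "(\<integral>\<^sup>+x. ennreal (f x powr p * (1+\<bar>x\<bar>^5)) \<partial>lborel) = ennreal J" and J_nn: "J \<ge> 0"
  using J_fin by (auto simp: J_def ennreal_enn2real_if)

definition q where "q = (SOME q. 0 < q \<and> q < 1 \<and> (\<forall>x. \<delta> \<le> \<bar>x\<bar> \<longrightarrow> f x \<le> q))"

lemma q: "0 < q" "q < 1" "\<And>x. \<delta> \<le> \<bar>x\<bar> \<Longrightarrow> f x \<le> q"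
  using someI_ex[OF exists_q] unfolding q_def[symmetric] by auto

lemma fb_le_fp: "\<beta> \<ge> p \<Longrightarrow> f x powr \<beta> \<le> f x powr p * (1+\<bar>x\<bar>^5)"
proof -
  assume b: "\<beta> \<ge> p"
  have "f x powr \<beta> \<le> f x powr p" using fpos[of x] fle1[of x] b by (intro powr_mono') auto
  also have "\<dots> \<le> f x powr p * (1+\<bar>x\<bar>^5)" by (intro mult_le_cancel_left1[THEN iffD2]) auto
  finally show ?thesis .
qed

lemma fb_int: "\<beta> \<ge> p \<Longrightarrow> integrable lborel (\<lambda>x. f x powr \<beta>)"
proof (rule integrableI_bounded)
  assume b: "\<beta> \<ge> p"
  show "(\<lambda>x. f x powr \<beta>) \<in> borel_measurable lborel" by measurable
  have "(\<integral>\<^sup>+x. ennreal (norm (f x powr \<beta>)) \<partial>lborel) \<le> (\<integral>\<^sup>+x. ennreal (f x powr p * (1+\<bar>x\<bar>^5)) \<partial>lborel)"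
    using fb_le_fp[OF b] by (intro nn_integral_mono ennreal_leI) auto
  then show "(\<integral>\<^sup>+x. ennreal (norm (f x powr \<beta>)) \<partial>lborel) < \<infinity>" using J_fin by (simp add: le_less_trans)
qed

lemma mom_pt:
  assumes b: "\<beta> \<ge> p"
  shows "f x powr \<beta> * \<bar>x\<bar>^5 \<le> exp (-(a*\<beta>)*x^2) * \<bar>x\<bar>^5 + q powr (\<beta>-p) * (f x powr p * (1+\<bar>x\<bar>^5))"
proof (cases "\<bar>x\<bar> < \<delta>")
  case True
  have "ln (f x) \<le> -a*x^2" using gauss[OF True] fpos[of x] ln_le_cancel_iff[of "f x" "exp (-a*x^2)"] by simp
  then have "\<beta> * ln (f x) \<le> \<beta> * (-a*x^2)" using b p by (intro mult_left_mono) auto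
  then have "f x powr \<beta> \<le> exp (-(a*\<beta>)*x^2)" using fpos[of x] by (simp add: powr_def algebra_simps)
  then have "f x powr \<beta> * \<bar>x\<bar>^5 \<le> exp (-(a*\<beta>)*x^2) * \<bar>x\<bar>^5" by (intro mult_right_mono) auto
  moreover have "0 \<le> q powr (\<beta>-p) * (f x powr p * (1+\<bar>x\<bar>^5))" by auto
  ultimately show ?thesis by linarith
next
  case False
  then have fq: "f x \<le> q" using q by auto
  have "f x powr \<beta> = f x powr (\<beta>-p) * f x powr p" by (simp add: powr_add[symmetric])
  also have "\<dots> \<le> q powr (\<beta>-p) * f x powr p"
    using fq fpos[of x] b by (intro mult_right_mono powr_mono2) auto
  finally have "f x powr \<beta> * \<bar>x\<bar>^5 \<le> q powr (\<beta>-p) * f x powr p * \<bar>x\<bar>^5" by (intro mult_right_mono) auto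
  also have "\<dots> \<le> q powr (\<beta>-p) * (f x powr p * (1+\<bar>x\<bar>^5))" by (simp add: algebra_simps)
  finally show ?thesis by (smt (verit) exp_gt_zero mult_nonneg_nonneg zero_le_power abs_ge_zero)
qed

lemma mom_upper:
  assumes b: "\<beta> \<ge> p"
  shows "(\<integral>\<^sup>+x. ennreal (f x powr \<beta> * \<bar>x\<bar>^5) \<partial>lborel) \<le> ennreal (2/(a*\<beta>)^3 + q powr (\<beta>-p) * J)"
proof -
  have ab: "a*\<beta> > 0" using apos b p by auto
  have "(\<integral>\<^sup>+x. ennreal (f x powr \<beta> * \<bar>x\<bar>^5) \<partial>lborel) \<le>
     (\<integral>\<^sup>+x. ennreal (exp (-(a*\<beta>)*x^2) * \<bar>x\<bar>^5) + ennreal (q powr (\<beta>-p)) * ennreal (f x powr p * (1+\<bar>x\<bar>^5)) \<partial>lborel)"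
  proof (intro nn_integral_mono)
    fix x
    have "ennreal (f x powr \<beta> * \<bar>x\<bar>^5) \<le> ennreal (exp (-(a*\<beta>)*x^2) * \<bar>x\<bar>^5 + q powr (\<beta>-p) * (f x powr p * (1+\<bar>x\<bar>^5)))"
      by (rule ennreal_leI[OF mom_pt[OF b]])
    also have "\<dots> = ennreal (exp (-(a*\<beta>)*x^2) * \<bar>x\<bar>^5) + ennreal (q powr (\<beta>-p)) * ennreal (f x powr p * (1+\<bar>x\<bar>^5))"
      by (subst ennreal_plus) (auto simp: ennreal_mult)
    finally show "ennreal (f x powr \<beta> * \<bar>x\<bar>^5) \<le> \<dots>" .
  qed
  also have "\<dots> = (\<integral>\<^sup>+x. ennreal (exp (-(a*\<beta>)*x^2) * \<bar>x\<bar>^5) \<partial>lborel) + ennreal (q powr (\<beta>-p)) * (\<integral>\<^sup>+x. ennreal (f x powr p * (1+\<bar>x\<bar>^5)) \<partial>lborel)"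
    by (subst nn_integral_add) (auto simp: nn_integral_cmult)
  also have "\<dots> = ennreal (2/(a*\<beta>)^3) + ennreal (q powr (\<beta>-p)) * ennreal J"
    by (simp only: gauss_abs5[OF ab] J_eq)
  also have "\<dots> = ennreal (2/(a*\<beta>)^3 + q powr (\<beta>-p) * J)"
    using ab J_nn by (simp add: ennreal_plus[symmetric] ennreal_mult[symmetric] del: ennreal_plus)
  finally show ?thesis .
qed

lemma N_lower:
  assumes b: "\<beta> \<ge> 1"
  shows "ennreal (2*exp(-A)/sqrt \<beta>) \<le> (\<integral>\<^sup>+x. ennreal (f x powr \<beta>) \<partial>lborel)"
proof -
  define w where "w = 1 / sqrt \<beta>"
  have w: "w > 0" "w \<le> 1" "\<beta> * w^2 = 1" using b by (auto simp: w_def power_divide)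
  have pt: "ennreal (exp (-A)) * indicator {-w..w} x \<le> ennreal (f x powr \<beta>)" for x
  proof (cases "x \<in> {-w..w}")
    case True
    then have xs: "\<bar>x\<bar> \<le> w" by auto
    then have x1: "\<bar>x\<bar> \<le> 1" using w by auto
    have "x^2 \<le> w^2" using xs by (metis abs_ge_zero power2_abs power_mono)
    then have "\<beta> * x^2 \<le> \<beta> * w^2" using b by (intro mult_left_mono) auto
    then have "\<beta> * x^2 \<le> 1" using w by simp
    then have "-A \<le> \<beta> * (-A*x^2)" using Apos by (simp add: algebra_simps)
    also have "\<dots> \<le> \<beta> * ln (f x)" using Alow[OF x1] b by (intro mult_left_mono) auto
    finally have "exp (-A) \<le> f x powr \<beta>" using fpos[of x] by (simp add: powr_def mult.commute)
    then show ?thesis using True by (simp add: ennreal_leI)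
  qed simp
  have eq: "integral\<^sup>N lborel (\<lambda>x. ennreal (exp (-A)) * indicator {-w..w} x) = ennreal (exp (-A)) * ennreal (2*w)"
    using w by (subst nn_integral_cmult_indicator) auto
  also have "\<dots> = ennreal (exp (-A) * (2*w))" using w by (subst ennreal_mult) auto
  also have "exp (-A) * (2*w) = 2*exp(-A)/sqrt \<beta>" by (simp add: w_def)
  finally have eq2: "integral\<^sup>N lborel (\<lambda>x. ennreal (exp (-A)) * indicator {-w..w} x) = ennreal (2*exp(-A)/sqrt \<beta>)" .
  have "integral\<^sup>N lborel (\<lambda>x. ennreal (exp (-A)) * indicator {-w..w} x) \<le> (\<integral>\<^sup>+x. ennreal (f x powr \<beta>) \<partial>lborel)"
    by (rule nn_integral_mono[OF pt])
  then show ?thesis unfolding eq2 .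
qed

end



lemma cube_exp_bound:
  fixes c b :: real assumes c: "c > 0" and b: "b \<ge> 0"
  shows "b^3 * exp (-c*b) \<le> 27/c^3"
proof -
  have "c*b/3 \<le> exp (c*b/3)" using exp_ge_add_one_self[of "c*b/3"] by linarith
  then have "(c*b/3)^3 \<le> exp (c*b/3)^3" using c b by (intro power_mono) auto
  also have "exp (c*b/3)^3 = exp (c*b)" by (subst exp_of_nat_mult[symmetric]) simp
  finally have "c^3*b^3 \<le> 27 * exp (c*b)" by (simp add: power_divide power_mult_distrib)
  then have "b^3 \<le> 27 * exp (c*b) / c^3" using c by (simp add: field_simps)
  then have "b^3 * exp (-c*b) \<le> 27 * exp (c*b) / c^3 * exp (-c*b)" by (intro mult_right_mono) auto
  also have "\<dots> = 27/c^3" by (simp add: exp_minus field_simps)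
  finally show ?thesis .
qed

context fsetting begin

lemma X_main:
  "\<exists>C. \<forall>\<beta>\<ge>p. prob_space (density lborel (\<lambda>x. ennreal (f x powr \<beta> / Nf f \<beta>))) \<and>
      (\<integral>\<^sup>+x. ennreal (\<bar>x\<bar>^5) \<partial>density lborel (\<lambda>x. ennreal (f x powr \<beta> / Nf f \<beta>))) \<le> ennreal (C / (\<beta>^2 * sqrt \<beta>))"
proof -
  define c0 where "c0 = - ln q"
  have c0: "c0 > 0" using q by (simp add: c0_def)
  define C1 where "C1 = 2/a^3 + q powr (-p) * J * (27/c0^3)"
  define C where "C = C1 * exp A / 2"
  have "prob_space (density lborel (\<lambda>x. ennreal (f x powr \<beta> / Nf f \<beta>))) \<and>
      (\<integral>\<^sup>+x. ennreal (\<bar>x\<bar>^5) \<partial>density lborel (\<lambda>x. ennreal (f x powr \<beta> / Nf f \<beta>))) \<le> ennreal (C / (\<beta>^2 * sqrt \<beta>))"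
    if b: "\<beta> \<ge> p" for \<beta>
  proof
    have b1: "\<beta> \<ge> 1" using b p by auto
    define N where "N = Nf f \<beta>"
    have NI: "(\<integral>\<^sup>+x. ennreal (f x powr \<beta>) \<partial>lborel) = ennreal N"
      unfolding N_def Nf_def by (rule nn_integral_eq_integral[OF fb_int[OF b]]) auto
    have "ennreal (2*exp(-A)/sqrt \<beta>) \<le> ennreal N" using N_lower[OF b1] NI by simp
    have N0: "N \<ge> 0" unfolding N_def Nf_def by (intro integral_nonneg_AE) auto
    then have Nlow: "2*exp(-A)/sqrt \<beta> \<le> N"
      using \<open>ennreal (2*exp(-A)/sqrt \<beta>) \<le> ennreal N\<close> ennreal_le_iff[OF N0] by simp
    have Npos: "N > 0" using Nlow b1 by (smt (verit) divide_pos_pos exp_gt_zero real_sqrt_gt_zero)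
    have dens: "(\<lambda>x. ennreal (f x powr \<beta> / N)) = (\<lambda>x. ennreal (1/N) * ennreal (f x powr \<beta>))"
      using Npos by (auto simp: ennreal_mult[symmetric])
    show "prob_space (density lborel (\<lambda>x. ennreal (f x powr \<beta> / Nf f \<beta>)))"
    proof (rule prob_spaceI)
      have "emeasure (density lborel (\<lambda>x. ennreal (f x powr \<beta> / N))) (space (density lborel (\<lambda>x. ennreal (f x powr \<beta> / N))))
          = (\<integral>\<^sup>+x. ennreal (1/N) * ennreal (f x powr \<beta>) \<partial>lborel)"
        by (subst emeasure_density) (auto simp: dens)
      also have "\<dots> = ennreal (1/N) * ennreal N" by (subst nn_integral_cmult) (auto simp: NI)
      also have "\<dots> = 1" using Npos by (simp add: ennreal_mult[symmetric])
      finally show "emeasure (density lborel (\<lambda>x. ennreal (f x powr \<beta> / Nf f \<beta>))) (space (density lborel (\<lambda>x. ennreal (f x powr \<beta> / Nf f \<beta>)))) = 1"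
        by (simp add: N_def)
    qed
    have "(\<integral>\<^sup>+x. ennreal (\<bar>x\<bar>^5) \<partial>density lborel (\<lambda>x. ennreal (f x powr \<beta> / N)))
        = (\<integral>\<^sup>+x. ennreal (f x powr \<beta> / N) * ennreal (\<bar>x\<bar>^5) \<partial>lborel)"
      by (subst nn_integral_density) auto
    also have "\<dots> = (\<integral>\<^sup>+x. ennreal (1/N) * ennreal (f x powr \<beta> * \<bar>x\<bar>^5) \<partial>lborel)"
      using Npos by (intro nn_integral_cong) (auto simp: ennreal_mult[symmetric])
    also have "\<dots> = ennreal (1/N) * (\<integral>\<^sup>+x. ennreal (f x powr \<beta> * \<bar>x\<bar>^5) \<partial>lborel)"
      by (subst nn_integral_cmult) auto
    also have "\<dots> \<le> ennreal (1/N) * ennreal (2/(a*\<beta>)^3 + q powr (\<beta>-p) * J)"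
      by (intro mult_left_mono mom_upper[OF b]) auto
    also have "\<dots> = ennreal ((2/(a*\<beta>)^3 + q powr (\<beta>-p) * J) / N)"
    proof -
      have X0: "0 \<le> 2/(a*\<beta>)^3 + q powr (\<beta>-p) * J" using apos b1 J_nn by auto
      show ?thesis using Npos X0 by (subst ennreal_mult[symmetric]) (auto simp: field_simps)
    qed
    also have "(2/(a*\<beta>)^3 + q powr (\<beta>-p) * J) / N \<le> C / (\<beta>^2 * sqrt \<beta>)"
    proof -
      have qp: "q powr (\<beta>-p) = q powr (-p) * exp (-c0*\<beta>)"
        using q by (simp add: c0_def powr_def algebra_simps exp_add[symmetric])
      have "\<beta>^3 * exp (-c0*\<beta>) \<le> 27/c0^3" using cube_exp_bound[OF c0, of \<beta>] b1 by simp
      then have "\<beta>^3 * (q powr (\<beta>-p) * J) \<le> q powr (-p) * J * (27/c0^3)"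
        unfolding qp using J_nn q
        by (smt (verit) mult.commute mult.left_commute mult_left_mono powr_ge_zero zero_le_mult_iff)
      moreover have "\<beta>^3 * (2/(a*\<beta>)^3) = 2/a^3" using apos b1 by (simp add: field_simps)
      ultimately have "\<beta>^3 * (2/(a*\<beta>)^3 + q powr (\<beta>-p) * J) \<le> C1"
        unfolding C1_def by (simp add: distrib_left)
      then have X: "2/(a*\<beta>)^3 + q powr (\<beta>-p) * J \<le> C1 / \<beta>^3" using b1 by (simp add: field_simps)
      have X0: "0 \<le> 2/(a*\<beta>)^3 + q powr (\<beta>-p) * J" using apos b1 J_nn by auto
      have "(2/(a*\<beta>)^3 + q powr (\<beta>-p) * J) / N \<le> (C1 / \<beta>^3) / (2*exp(-A)/sqrt \<beta>)"
        using X X0 Nlow Npos b1 by (intro frac_le) auto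
      also have "\<dots> = C / (\<beta>^2 * sqrt \<beta>)"
      proof -
        have s: "sqrt \<beta> * sqrt \<beta> = \<beta>" using b1 by simp
        have "(C1 / \<beta>^3) / (2*exp(-A)/sqrt \<beta>) = C1 * exp A / 2 * (sqrt \<beta> / \<beta>^3)"
          by (simp add: exp_minus field_simps)
        also have "sqrt \<beta> / \<beta>^3 = 1 / (\<beta>^2 * sqrt \<beta>)"
          using b1 s by (simp add: field_simps power3_eq_cube power2_eq_square)
        finally show ?thesis by (simp add: C_def)
      qed
      finally show ?thesis .
    qed
    finally show "(\<integral>\<^sup>+x. ennreal (\<bar>x\<bar>^5) \<partial>density lborel (\<lambda>x. ennreal (f x powr \<beta> / Nf f \<beta>))) \<le> ennreal (C / (\<beta>^2 * sqrt \<beta>))"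
      by (simp add: N_def ennreal_leI order_trans)
  qed
  then show ?thesis by blast
qed

end



lemma comp_integral:
  assumes "\<And>i. i \<in> I \<Longrightarrow> prob_space (M i)" "i \<in> I" "g \<in> borel_measurable (M i)"
  shows "(\<integral>\<^sup>+\<omega>. g (\<omega> i) \<partial>PiM I M) = (\<integral>\<^sup>+x. g x \<partial>M i)"
proof -
  have "(\<integral>\<^sup>+x. g x \<partial>M i) = (\<integral>\<^sup>+x. g x \<partial>distr (PiM I M) (M i) (\<lambda>\<omega>. \<omega> i))"
    using distr_PiM_component[of I M i] assms by simp
  also have "\<dots> = (\<integral>\<^sup>+\<omega>. g (\<omega> i) \<partial>PiM I M)"
    using assms by (subst nn_integral_distr) (auto intro: measurable_component_singleton)
  finally show ?thesis by simp
qed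

lemma pair_fst_integral:
  assumes "prob_space M1" "prob_space M2" "g \<in> borel_measurable M1"
  shows "(\<integral>\<^sup>+p. g (fst p) \<partial>(M1 \<Otimes>\<^sub>M M2)) = (\<integral>\<^sup>+x. g x \<partial>M1)"
proof -
  interpret M2: prob_space M2 by fact
  have "(\<integral>\<^sup>+x. g x \<partial>M1) = (\<integral>\<^sup>+x. g x \<partial>distr (M1 \<Otimes>\<^sub>M M2) M1 fst)"
    using M2.distr_pair_fst[of M1] by simp
  also have "\<dots> = (\<integral>\<^sup>+p. g (fst p) \<partial>(M1 \<Otimes>\<^sub>M M2))"
    using assms by (subst nn_integral_distr) auto
  finally show ?thesis by simp
qed

lemma pair_snd_integral:
  assumes "prob_space M1" "prob_space M2" "g \<in> borel_measurable M2"
  shows "(\<integral>\<^sup>+p. g (snd p) \<partial>(M1 \<Otimes>\<^sub>M M2)) = (\<integral>\<^sup>+x. g x \<partial>M2)"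
proof -
  interpret M2: prob_space M2 by fact
  interpret M1: prob_space M1 by fact
  have "(\<integral>\<^sup>+p. g (snd p) \<partial>(M1 \<Otimes>\<^sub>M M2)) = (\<integral>\<^sup>+x. \<integral>\<^sup>+y. g (snd (x,y)) \<partial>M2 \<partial>M1)"
    using assms by (subst M2.nn_integral_fst) auto
  also have "\<dots> = (\<integral>\<^sup>+x. (\<integral>\<^sup>+y. g y \<partial>M2) \<partial>M1)" by simp
  also have "\<dots> = (\<integral>\<^sup>+y. g y \<partial>M2)" by (simp add: M1.emeasure_space_1)
  finally show ?thesis .
qed

lemma markov_prod:
  fixes MX MY :: "real measure" and R :: "real \<Rightarrow> real" and d :: nat
  assumes X: "prob_space MX" "sets MX = sets borel" and Y: "prob_space MY" "sets MY = sets borel"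
    and e: "\<epsilon> > 0" and b: "\<beta> > 0" and c: "c \<ge> 0"
    and mX: "(\<integral>\<^sup>+x. ennreal (\<bar>x\<bar>^5) \<partial>MX) \<le> ennreal BX" and mY: "(\<integral>\<^sup>+x. ennreal (\<bar>x\<bar>^5) \<partial>MY) \<le> ennreal BY"
    and BX: "BX \<ge> 0" and BY: "BY \<ge> 0"
    and Rb: "\<And>z. \<bar>R z\<bar> \<le> c * \<bar>z\<bar>^5"
  shows "measure (PiM {..<d} (\<lambda>_. MX) \<Otimes>\<^sub>M PiM {..<d} (\<lambda>_. MY))
          {p \<in> space (PiM {..<d} (\<lambda>_. MX) \<Otimes>\<^sub>M PiM {..<d} (\<lambda>_. MY)).
             \<bar>\<beta> * (\<Sum>i<d. R (snd p i) - R (fst p i))\<bar> > \<epsilon>} \<le> \<beta> * c * real d * (BX + BY) / \<epsilon>"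
proof -
  define PX where "PX = PiM {..<d} (\<lambda>_. MX)"
  define PY where "PY = PiM {..<d} (\<lambda>_. MY)"
  define JJ where "JJ = PX \<Otimes>\<^sub>M PY"
  have pX: "prob_space PX" unfolding PX_def by (rule prob_space_PiM) (use X in auto)
  have pY: "prob_space PY" unfolding PY_def by (rule prob_space_PiM) (use Y in auto)
  have pJ: "prob_space JJ" unfolding JJ_def by (rule prob_space_pair[OF pX pY])
  interpret JJ: prob_space JJ by (rule pJ)
  define V where "V = (\<lambda>p. \<beta> * c * (\<Sum>i<d. \<bar>snd p i\<bar>^5 + \<bar>fst p i\<bar>^5))"
  have V0: "V p \<ge> 0" for p using b c by (auto simp: V_def intro!: mult_nonneg_nonneg sum_nonneg)
  have ms: "(\<lambda>p. snd p i) \<in> borel_measurable JJ" if i: "i < d" for i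
  proof -
    have "(\<lambda>p. snd p i) \<in> JJ \<rightarrow>\<^sub>M MY" unfolding JJ_def PY_def
      by (rule measurable_compose[OF measurable_snd measurable_component_singleton]) (simp add: i)
    then show ?thesis by (subst measurable_cong_sets[OF refl Y(2)[symmetric]])
  qed
  have mf: "(\<lambda>p. fst p i) \<in> borel_measurable JJ" if i: "i < d" for i
  proof -
    have "(\<lambda>p. fst p i) \<in> JJ \<rightarrow>\<^sub>M MX" unfolding JJ_def PX_def
      by (rule measurable_compose[OF measurable_fst measurable_component_singleton]) (simp add: i)
    then show ?thesis by (subst measurable_cong_sets[OF refl X(2)[symmetric]])
  qed
  have Vm: "V \<in> borel_measurable JJ"
    unfolding V_def
    by (auto intro!: borel_measurable_const borel_measurable_times borel_measurable_sum borel_measurable_add borel_measurable_power borel_measurable_abs ms mf)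
  define T where "T = {p \<in> space JJ. 1 \<le> ennreal (1/\<epsilon>) * ennreal (V p)}"
  define S where "S = {p \<in> space JJ. \<bar>\<beta> * (\<Sum>i<d. R (snd p i) - R (fst p i))\<bar> > \<epsilon>}"
  have ST: "S \<subseteq> T"
  proof
    fix p assume "p \<in> S"
    then have p: "p \<in> space JJ" "\<epsilon> < \<bar>\<beta> * (\<Sum>i<d. R (snd p i) - R (fst p i))\<bar>" by (auto simp: S_def)
    have s1: "\<bar>\<Sum>i<d. R (snd p i) - R (fst p i)\<bar> \<le> (\<Sum>i<d. \<bar>R (snd p i) - R (fst p i)\<bar>)" by (rule sum_abs)
    have s2: "(\<Sum>i<d. \<bar>R (snd p i) - R (fst p i)\<bar>) \<le> (\<Sum>i<d. c * (\<bar>snd p i\<bar>^5 + \<bar>fst p i\<bar>^5))"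
    proof (intro sum_mono)
      fix i
      show "\<bar>R (snd p i) - R (fst p i)\<bar> \<le> c * (\<bar>snd p i\<bar>^5 + \<bar>fst p i\<bar>^5)"
        using Rb[of "snd p i"] Rb[of "fst p i"] abs_triangle_ineq4[of "R (snd p i)" "R (fst p i)"]
        unfolding distrib_left by linarith
    qed
    have s3: "(\<Sum>i<d. c * (\<bar>snd p i\<bar>^5 + \<bar>fst p i\<bar>^5)) = c * (\<Sum>i<d. \<bar>snd p i\<bar>^5 + \<bar>fst p i\<bar>^5)"
      by (rule sum_distrib_left[symmetric])
    have "\<bar>\<beta> * (\<Sum>i<d. R (snd p i) - R (fst p i))\<bar> = \<beta> * \<bar>\<Sum>i<d. R (snd p i) - R (fst p i)\<bar>"
      using b by (simp add: abs_mult)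
    also have "\<dots> \<le> \<beta> * (c * (\<Sum>i<d. \<bar>snd p i\<bar>^5 + \<bar>fst p i\<bar>^5))"
    proof -
      have s4: "\<bar>\<Sum>i<d. R (snd p i) - R (fst p i)\<bar> \<le> c * (\<Sum>i<d. \<bar>snd p i\<bar>^5 + \<bar>fst p i\<bar>^5)"
        using s1 s2 s3 by linarith
      show ?thesis using b by (intro mult_left_mono[OF s4]) auto
    qed
    also have "\<dots> = V p" by (simp add: V_def)
    finally have "\<epsilon> < V p" using p(2) by linarith
    then have "1 \<le> V p / \<epsilon>" using e by simp
    then have "1 \<le> ennreal (V p / \<epsilon>)" by (simp add: ennreal_leI[of 1, simplified])
    also have "ennreal (V p / \<epsilon>) = ennreal (1/\<epsilon>) * ennreal (V p)"
      using e V0[of p] by (simp add: ennreal_mult[symmetric])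
    finally show "p \<in> T" using p by (simp add: T_def)
  qed
  have Tm: "T \<in> sets JJ" unfolding T_def using Vm by measurable
  have "emeasure JJ T \<le> ennreal (1/\<epsilon>) * (\<integral>\<^sup>+p. ennreal (V p) * indicator (space JJ) p \<partial>JJ)"
    unfolding T_def by (rule nn_integral_Markov_inequality) (use Vm in auto)
  also have "(\<integral>\<^sup>+p. ennreal (V p) * indicator (space JJ) p \<partial>JJ) = (\<integral>\<^sup>+p. ennreal (V p) \<partial>JJ)"
    by (intro nn_integral_cong) auto
  also have "\<dots> = ennreal (\<beta> * c) * (\<Sum>i<d. (\<integral>\<^sup>+p. ennreal (\<bar>snd p i\<bar>^5) \<partial>JJ) + (\<integral>\<^sup>+p. ennreal (\<bar>fst p i\<bar>^5) \<partial>JJ))"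
  proof -
    have "(\<lambda>p. ennreal (V p)) = (\<lambda>p. ennreal (\<beta> * c) * (\<Sum>i<d. ennreal (\<bar>snd p i\<bar>^5) + ennreal (\<bar>fst p i\<bar>^5)))"
      using b c by (auto simp: V_def ennreal_mult sum_nonneg ennreal_plus[symmetric] simp del: ennreal_plus)
    have msE: "(\<lambda>p. ennreal (\<bar>snd p i\<bar>^5)) \<in> borel_measurable JJ" if i: "i < d" for i
      using ms[OF i] by simp
    have mfE: "(\<lambda>p. ennreal (\<bar>fst p i\<bar>^5)) \<in> borel_measurable JJ" if i: "i < d" for i
      using mf[OF i] by simp
    have "(\<integral>\<^sup>+p. ennreal (V p) \<partial>JJ) = (\<integral>\<^sup>+p. ennreal (\<beta> * c) * (\<Sum>i<d. ennreal (\<bar>snd p i\<bar>^5) + ennreal (\<bar>fst p i\<bar>^5)) \<partial>JJ)"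
      by (simp only: \<open>(\<lambda>p. ennreal (V p)) = _\<close>)
    also have "\<dots> = ennreal (\<beta> * c) * (\<integral>\<^sup>+p. (\<Sum>i<d. ennreal (\<bar>snd p i\<bar>^5) + ennreal (\<bar>fst p i\<bar>^5)) \<partial>JJ)"
      by (rule nn_integral_cmult) (auto intro!: borel_measurable_sum borel_measurable_add msE mfE)
    also have "(\<integral>\<^sup>+p. (\<Sum>i<d. ennreal (\<bar>snd p i\<bar>^5) + ennreal (\<bar>fst p i\<bar>^5)) \<partial>JJ)
        = (\<Sum>i<d. (\<integral>\<^sup>+p. ennreal (\<bar>snd p i\<bar>^5) + ennreal (\<bar>fst p i\<bar>^5) \<partial>JJ))"
      by (rule nn_integral_sum) (auto intro!: borel_measurable_add msE mfE)
    also have "\<dots> = (\<Sum>i<d. (\<integral>\<^sup>+p. ennreal (\<bar>snd p i\<bar>^5) \<partial>JJ) + (\<integral>\<^sup>+p. ennreal (\<bar>fst p i\<bar>^5) \<partial>JJ))"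
      by (intro sum.cong refl nn_integral_add msE mfE) auto
    finally show ?thesis .
  qed
  also have "\<dots> = ennreal (\<beta> * c) * (\<Sum>i<d. (\<integral>\<^sup>+x. ennreal (\<bar>x\<bar>^5) \<partial>MY) + (\<integral>\<^sup>+x. ennreal (\<bar>x\<bar>^5) \<partial>MX))"
  proof -
    have "(\<integral>\<^sup>+p. ennreal (\<bar>snd p i\<bar>^5) \<partial>JJ) = (\<integral>\<^sup>+x. ennreal (\<bar>x\<bar>^5) \<partial>MY)"
      and "(\<integral>\<^sup>+p. ennreal (\<bar>fst p i\<bar>^5) \<partial>JJ) = (\<integral>\<^sup>+x. ennreal (\<bar>x\<bar>^5) \<partial>MX)" if i: "i < d" for i
    proof -
      have "(\<integral>\<^sup>+p. ennreal (\<bar>snd p i\<bar>^5) \<partial>JJ) = (\<integral>\<^sup>+\<omega>. ennreal (\<bar>\<omega> i\<bar>^5) \<partial>PY)"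
        unfolding JJ_def using pX pY
        by (rule pair_snd_integral[where g="\<lambda>\<omega>. ennreal (\<bar>\<omega> i\<bar>^5)"]) (auto simp: PY_def i Y measurable_cong_sets[OF Y(2) refl] intro!: measurable_compose[OF measurable_component_singleton])
      also have "\<dots> = (\<integral>\<^sup>+x. ennreal (\<bar>x\<bar>^5) \<partial>MY)"
        unfolding PY_def by (rule comp_integral) (use Y i in \<open>auto simp: measurable_cong_sets[OF Y(2) refl]\<close>)
      finally show "(\<integral>\<^sup>+p. ennreal (\<bar>snd p i\<bar>^5) \<partial>JJ) = (\<integral>\<^sup>+x. ennreal (\<bar>x\<bar>^5) \<partial>MY)" .
      have "(\<integral>\<^sup>+p. ennreal (\<bar>fst p i\<bar>^5) \<partial>JJ) = (\<integral>\<^sup>+\<omega>. ennreal (\<bar>\<omega> i\<bar>^5) \<partial>PX)"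
        unfolding JJ_def using pX pY
        by (rule pair_fst_integral[where g="\<lambda>\<omega>. ennreal (\<bar>\<omega> i\<bar>^5)"]) (auto simp: PX_def i X measurable_cong_sets[OF X(2) refl] intro!: measurable_compose[OF measurable_component_singleton])
      also have "\<dots> = (\<integral>\<^sup>+x. ennreal (\<bar>x\<bar>^5) \<partial>MX)"
        unfolding PX_def by (rule comp_integral) (use X i in \<open>auto simp: measurable_cong_sets[OF X(2) refl]\<close>)
      finally show "(\<integral>\<^sup>+p. ennreal (\<bar>fst p i\<bar>^5) \<partial>JJ) = (\<integral>\<^sup>+x. ennreal (\<bar>x\<bar>^5) \<partial>MX)" .
    qed
    then show ?thesis by (intro arg_cong2[where f="(*)"] refl sum.cong) auto
  qed
  also have "\<dots> \<le> ennreal (\<beta> * c) * (\<Sum>i<d. ennreal BY + ennreal BX)"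
    by (intro mult_left_mono sum_mono add_mono mX mY) auto
  also have "ennreal (1/\<epsilon>) * (ennreal (\<beta> * c) * (\<Sum>i<d. ennreal BY + ennreal BX)) = ennreal (\<beta> * c * real d * (BX + BY) / \<epsilon>)"
    using e b c BX BY by (simp add: ennreal_mult[symmetric] ennreal_plus[symmetric] ennreal_of_nat_eq_real_of_nat del: ennreal_plus)
  finally have ET: "emeasure JJ T \<le> ennreal (\<beta> * c * real d * (BX + BY) / \<epsilon>)" by (metis mult_left_mono zero_le)
  have "measure JJ S \<le> measure JJ T"
  proof (cases "S \<in> sets JJ")
    case True then show ?thesis using ST Tm by (intro JJ.finite_measure_mono) auto
  qed (simp add: measure_notin_sets)
  also have "measure JJ T \<le> \<beta> * c * real d * (BX + BY) / \<epsilon>"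
    using ET e b c BX BY by (simp add: JJ.emeasure_eq_measure ennreal_le_iff)
  finally show ?thesis by (simp add: S_def JJ_def PX_def PY_def)
qed




lemma Y_mom:
  fixes H \<beta> :: real assumes "H \<noteq> 0" "\<beta> > 0"
  shows "prob_space (density lborel (\<lambda>x. ennreal (normal_density 0 (1 / sqrt (\<beta> * \<bar>H\<bar>)) x)))"
    and "(\<integral>\<^sup>+x. ennreal (\<bar>x\<bar>^5) \<partial>density lborel (\<lambda>x. ennreal (normal_density 0 (1 / sqrt (\<beta> * \<bar>H\<bar>)) x)))
          = ennreal ((8 * sqrt (2/pi) / sqrt \<bar>H\<bar> ^ 5) / (\<beta>^2 * sqrt \<beta>))"
proof -
  show "prob_space (density lborel (\<lambda>x. ennreal (normal_density 0 (1 / sqrt (\<beta> * \<bar>H\<bar>)) x)))"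
    using prob_space_normal_density[of "1 / sqrt (\<beta> * \<bar>H\<bar>)" 0] assms by simp
  define \<sigma> where "\<sigma> = 1 / sqrt (\<beta> * \<bar>H\<bar>)"
  have sg: "\<sigma> > 0" using assms by (simp add: \<sigma>_def)
  have "(\<integral>\<^sup>+x. ennreal (\<bar>x\<bar>^5) \<partial>density lborel (\<lambda>x. ennreal (normal_density 0 \<sigma> x)))
      = (\<integral>\<^sup>+x. ennreal (normal_density 0 \<sigma> x) * ennreal (\<bar>x\<bar>^5) \<partial>lborel)"
    by (subst nn_integral_density) auto
  also have "\<dots> = (\<integral>\<^sup>+x. ennreal (normal_density 0 \<sigma> x * \<bar>x\<bar>^5) \<partial>lborel)"
    by (intro nn_integral_cong) (simp add: ennreal_mult)
  also have "\<dots> = ennreal (8 * \<sigma>^5 * sqrt (2/pi))" by (rule normal_abs5[OF sg])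
  also have "8 * \<sigma>^5 * sqrt (2/pi) = (8 * sqrt (2/pi) / sqrt \<bar>H\<bar> ^ 5) / (\<beta>^2 * sqrt \<beta>)"
  proof -
    have "sqrt \<beta> ^ 5 = \<beta>^2 * sqrt \<beta>" using assms
      by (simp add: eval_nat_numeral)
    then show ?thesis using assms by (simp add: \<sigma>_def real_sqrt_mult power_mult_distrib field_simps)
  qed
  finally show "(\<integral>\<^sup>+x. ennreal (\<bar>x\<bar>^5) \<partial>density lborel (\<lambda>x. ennreal (normal_density 0 (1 / sqrt (\<beta> * \<bar>H\<bar>)) x)))
          = ennreal ((8 * sqrt (2/pi) / sqrt \<bar>H\<bar> ^ 5) / (\<beta>^2 * sqrt \<beta>))" by (simp add: \<sigma>_def)
qed

theorem lemma3:
  fixes f :: "real \<Rightarrow> real" and l L :: real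
  defines "h \<equiv> (\<lambda>x. ln (f x))"
  defines "H \<equiv> (deriv ^^ 2) (\<lambda>x. ln (f x)) 0"
  assumes f_pos: "\<And>x. f x > 0"
    and f_C5: "Cn 5 f"
    and f0: "f 0 = 1"
    and f'0: "deriv f 0 = 0"
    and unique_max: "\<And>x. x \<noteq> 0 \<Longrightarrow> f x < f 0"
    and H_neg: "H < 0"
    and L_pos: "L > 0"
    and h5_bound: "\<And>x. \<bar>(deriv ^^ 5) h x\<bar> < L"
    and tails_cap: "\<exists>\<gamma> M K. \<gamma> > 0 \<and> M > 0 \<and> K > 0
          \<and> (\<exists>K'<K. \<forall>x. \<bar>x\<bar> > M \<longrightarrow> f x * \<bar>x\<bar> powr \<gamma> \<le> K')
          \<and> (\<exists>\<delta>\<^sub>2. 0 < \<delta>\<^sub>2 \<and> \<delta>\<^sub>2 < M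
               \<and> (\<forall>x. \<bar>x\<bar> < \<delta>\<^sub>2 \<longrightarrow> f x \<le> exp (- (x\<^sup>2 * \<bar>H\<bar> / 4)))
               \<and> (\<forall>x. \<delta>\<^sub>2 \<le> \<bar>x\<bar> \<and> \<bar>x\<bar> \<le> M \<longrightarrow> f x \<le> exp (- (\<delta>\<^sub>2\<^sup>2 * \<bar>H\<bar> / 4))))"
    and l_pos: "l > 0"
  shows "\<forall>\<epsilon>>0. ((\<lambda>d::nat.
            measure (joint_law f H (l * real d) d)
              {p \<in> space (joint_law f H (l * real d) d).
                 \<bar>(l * real d) * (\<Sum>i<d. Rem f (snd p i) - Rem f (fst p i))\<bar> > \<epsilon>})
          \<longlongrightarrow> 0) sequentially"
proof -
  obtain \<gamma> M K K' \<delta>2 where gMK: "\<gamma> > 0" "M > 0" "K > 0" and K'K: "K' < K"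
      and tl0: "\<forall>x. \<bar>x\<bar> > M \<longrightarrow> f x * \<bar>x\<bar> powr \<gamma> \<le> K'"
      and d2: "0 < \<delta>2" "\<delta>2 < M" and ga0: "\<forall>x. \<bar>x\<bar> < \<delta>2 \<longrightarrow> f x \<le> exp (- (x\<^sup>2 * \<bar>H\<bar> / 4))"
      and cap2: "\<forall>x. \<delta>2 \<le> \<bar>x\<bar> \<and> \<bar>x\<bar> \<le> M \<longrightarrow> f x \<le> exp (- (\<delta>2\<^sup>2 * \<bar>H\<bar> / 4))"
    using tails_cap by (elim exE conjE) (rule that)
  have tl: "\<And>x. \<bar>x\<bar> > M \<Longrightarrow> f x * \<bar>x\<bar> powr \<gamma> \<le> K'" using tl0 by simp
  have ga: "\<And>x. \<bar>x\<bar> < \<delta>2 \<Longrightarrow> f x \<le> exp (- (x\<^sup>2 * \<bar>H\<bar> / 4))" using ga0 by simp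
  have Df: "Dn 5 f" using f_C5 by (simp add: Cn_def Dn_def)
  have Dh: "Dn 5 h" unfolding h_def by (rule Dn_ln[OF f_pos Df])
  have df: "\<And>x. (f has_real_derivative deriv f x) (at x)"
    using Df by (simp add: Dn_Suc numeral_eq_Suc)
  have fcont: "continuous_on UNIV f"
    by (intro continuous_at_imp_continuous_on ballI DERIV_isCont[OF df])
  have h0: "h 0 = 0" using f0 by (simp add: h_def)
  have dh0: "deriv h 0 = 0"
  proof -
    have "(h has_real_derivative deriv f 0 / f 0) (at 0)"
      unfolding h_def using f_pos[of 0] by (auto intro!: derivative_eq_intros df)
    then show ?thesis using f'0 by (simp add: DERIV_imp_deriv)
  qed
  define h3 where "h3 = (deriv^^3) h 0"
  define h4 where "h4 = (deriv^^4) h 0"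
  have H': "H = (deriv^^2) h 0" by (simp add: H_def h_def)
  have remeq: "\<exists>t. Rem f z = (deriv^^5) h t / 120 * z^5" for z
  proof -
    obtain t where t: "h z = h 0 + deriv h 0 * z + (deriv^^2) h 0 / 2 * z^2 + (deriv^^3) h 0 / 6 * z^3
          + (deriv^^4) h 0 / 24 * z^4 + (deriv^^5) h t / 120 * z^5"
      using taylor_h[OF Dh] by blast
    have "Rem f z = h z - h 0 - (deriv^^2) h 0 / 2 * z^2 - (deriv^^3) h 0 / 6 * z^3 - (deriv^^4) h 0 / 24 * z^4"
      by (simp add: Rem_def h_def Let_def)
    then show ?thesis using t dh0 by (intro exI[of _ t]) simp
  qed
  have Rb: "\<bar>Rem f z\<bar> \<le> L/120 * \<bar>z\<bar>^5" for z
  proof -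
    obtain t where t: "Rem f z = (deriv^^5) h t / 120 * z^5" using remeq by blast
    have "\<bar>Rem f z\<bar> = \<bar>(deriv^^5) h t\<bar> / 120 * \<bar>z\<bar>^5" by (simp add: t abs_mult power_abs)
    also have "\<dots> \<le> L / 120 * \<bar>z\<bar>^5" using h5_bound[of t] by (intro mult_right_mono divide_right_mono) auto
    finally show ?thesis .
  qed
  define A where "A = \<bar>H\<bar>/2 + \<bar>h3\<bar>/6 + \<bar>h4\<bar>/24 + L/120 + 1"
  have Apos: "A > 0" using L_pos by (simp add: A_def add_pos_nonneg)
  have Alow: "-A*x^2 \<le> ln (f x)" if x1: "\<bar>x\<bar> \<le> 1" for x
  proof -
    have hx: "h x = H/2 * x^2 + h3/6 * x^3 + h4/24 * x^4 + Rem f x"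
      by (simp add: Rem_def h_def Let_def H_def h3_def h4_def f0)
    have ax: "\<bar>x\<bar>^2 = x^2" by simp
    have p3: "\<bar>x\<bar>^3 \<le> x^2" using power_decreasing[of 2 3 "\<bar>x\<bar>"] x1 ax by simp
    have p4: "\<bar>x\<bar>^4 \<le> x^2" using power_decreasing[of 2 4 "\<bar>x\<bar>"] x1 ax by simp
    have p5: "\<bar>x\<bar>^5 \<le> x^2" using power_decreasing[of 2 5 "\<bar>x\<bar>"] x1 ax by simp
    have b1: "-(\<bar>H\<bar>/2 * x^2) \<le> H/2 * x^2"
    proof -
      have "\<bar>H/2 * x^2\<bar> = \<bar>H\<bar>/2 * x^2" by (simp add: abs_mult)
      then show ?thesis by (smt (verit) abs_ge_minus_self)
    qed
    have "\<bar>h3/6 * x^3\<bar> = \<bar>h3\<bar>/6 * \<bar>x\<bar>^3" by (simp add: abs_mult power_abs)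
    also have "\<dots> \<le> \<bar>h3\<bar>/6 * x^2" using p3 by (intro mult_left_mono) auto
    finally have "\<bar>h3/6 * x^3\<bar> \<le> \<bar>h3\<bar>/6 * x^2" .
    then have b2: "-(\<bar>h3\<bar>/6 * x^2) \<le> h3/6 * x^3" by linarith
    have "\<bar>h4/24 * x^4\<bar> \<le> \<bar>h4\<bar>/24 * x^4" by (simp add: abs_mult)
    also have "\<dots> \<le> \<bar>h4\<bar>/24 * x^2" using p4 by (intro mult_left_mono) auto
    finally have b3: "-(\<bar>h4\<bar>/24 * x^2) \<le> h4/24 * x^4" by linarith
    have "L/120 * \<bar>x\<bar>^5 \<le> L/120 * x^2" using p5 L_pos by (intro mult_left_mono) auto
    then have b4: "-(L/120 * x^2) \<le> Rem f x" using Rb[of x] by linarith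
    have Ae: "A*x^2 = \<bar>H\<bar>/2*x^2 + \<bar>h3\<bar>/6*x^2 + \<bar>h4\<bar>/24*x^2 + L/120*x^2 + x^2"
      by (simp add: A_def algebra_simps)
    have "-(A*x^2) \<le> h x" unfolding hx Ae using b1 b2 b3 b4 by (smt (verit) zero_le_power2)
    then show ?thesis by (simp add: h_def)
  qed
  have Hpos: "\<bar>H\<bar> > 0" using H_neg by simp
  interpret fs: fsetting f A "\<bar>H\<bar>/4" \<delta>2 M "max K' 1" \<gamma>
  proof
    show "\<And>x. 0 < f x" by (rule f_pos)
    show "continuous_on UNIV f" by (rule fcont)
    show "\<And>x. x \<noteq> 0 \<Longrightarrow> f x < 1" using unique_max f0 by simp
    show "f 0 = 1" by (rule f0)
    show "A > 0" by (rule Apos)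
    show "\<And>x. \<bar>x\<bar> \<le> 1 \<Longrightarrow> -A*x^2 \<le> ln (f x)" by (rule Alow)
    show "\<bar>H\<bar>/4 > 0" using Hpos by simp
    show "\<delta>2 > 0" by (rule d2)
    show "\<And>x. \<bar>x\<bar> < \<delta>2 \<Longrightarrow> f x \<le> exp (-(\<bar>H\<bar>/4)*x^2)"
      using ga by (simp add: algebra_simps)
    show "\<gamma> > 0" "M > 0" "max K' 1 > 0" using gMK by auto
    show "\<And>x. \<bar>x\<bar> > M \<Longrightarrow> f x * \<bar>x\<bar> powr \<gamma> \<le> max K' 1" using tl by (meson max.coboundedI1)
  qed
  obtain Cx where Cx: "\<And>\<beta>. \<beta> \<ge> fs.p \<Longrightarrow> prob_space (density lborel (\<lambda>x. ennreal (f x powr \<beta> / Nf f \<beta>))) \<and>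
      (\<integral>\<^sup>+x. ennreal (\<bar>x\<bar>^5) \<partial>density lborel (\<lambda>x. ennreal (f x powr \<beta> / Nf f \<beta>))) \<le> ennreal (Cx / (\<beta>^2 * sqrt \<beta>))"
    using fs.X_main by blast
  define Cx' where "Cx' = max Cx 0"
  define Cy where "Cy = 8 * sqrt (2/pi) / sqrt \<bar>H\<bar> ^ 5"
  have Cx': "Cx' \<ge> 0" "Cx \<le> Cx'" by (auto simp: Cx'_def)
  have Cy: "Cy \<ge> 0" by (simp add: Cy_def)
  show ?thesis
  proof (intro allI impI)
    fix \<epsilon> :: real assume e: "\<epsilon> > 0"
    define K0 where "K0 = L/120 * (Cx' + Cy) / (\<epsilon> * l * sqrt l)"
    define D0 where "D0 = nat \<lceil>fs.p / l\<rceil> + 1"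
    have bnd: "measure (joint_law f H (l * real d) d)
              {p \<in> space (joint_law f H (l * real d) d).
                 \<bar>(l * real d) * (\<Sum>i<d. Rem f (snd p i) - Rem f (fst p i))\<bar> > \<epsilon>} \<le> K0 / sqrt (real d)"
      if dD: "d \<ge> D0" for d
    proof -
      define \<beta> where "\<beta> = l * real d"
      have d1: "real d \<ge> 1" using dD by (simp add: D0_def)
      have "fs.p / l \<le> real d" using dD unfolding D0_def by linarith
      then have bp: "\<beta> \<ge> fs.p" using l_pos by (simp add: \<beta>_def field_simps)
      have b0: "\<beta> > 0" using l_pos d1 by (simp add: \<beta>_def)
      define BX where "BX = Cx' / (\<beta>^2 * sqrt \<beta>)"
      define BY where "BY = Cy / (\<beta>^2 * sqrt \<beta>)"
      have mX: "(\<integral>\<^sup>+x. ennreal (\<bar>x\<bar>^5) \<partial>density lborel (\<lambda>x. ennreal (f x powr \<beta> / Nf f \<beta>))) \<le> ennreal BX"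
        using Cx[OF bp] order_trans ennreal_leI[of "Cx / (\<beta>^2 * sqrt \<beta>)" BX] Cx' b0
        unfolding BX_def by (meson divide_right_mono less_imp_le mult_pos_pos real_sqrt_gt_zero zero_less_power)
      have mY: "(\<integral>\<^sup>+x. ennreal (\<bar>x\<bar>^5) \<partial>density lborel (\<lambda>x. ennreal (normal_density 0 (1 / sqrt (\<beta> * \<bar>H\<bar>)) x))) \<le> ennreal BY"
        using Y_mom(2)[of H \<beta>] Hpos b0 by (simp add: BY_def Cy_def)
      have "measure (joint_law f H \<beta> d)
              {p \<in> space (joint_law f H \<beta> d).
                 \<bar>\<beta> * (\<Sum>i<d. Rem f (snd p i) - Rem f (fst p i))\<bar> > \<epsilon>} \<le> \<beta> * (L/120) * real d * (BX + BY) / \<epsilon>"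
        unfolding joint_law_def
        by (rule markov_prod) (use Cx[OF bp] Y_mom(1)[of H \<beta>] Hpos b0 e L_pos mX mY Rb Cx' Cy in \<open>auto simp: BX_def BY_def\<close>)
      also have "\<beta> * (L/120) * real d * (BX + BY) / \<epsilon> = K0 / sqrt (real d)"
      proof -
        have sb: "sqrt \<beta> = sqrt l * sqrt (real d)" by (simp add: \<beta>_def real_sqrt_mult)
        have "sqrt l > 0" "sqrt (real d) > 0" using l_pos d1 by auto
        then show ?thesis using l_pos d1 e
          by (simp add: BX_def BY_def K0_def sb \<beta>_def field_simps power2_eq_square real_sqrt_mult)
      qed
      finally show ?thesis by (simp add: \<beta>_def)
    qed
    have lim: "((\<lambda>d::nat. K0 / sqrt (real d)) \<longlongrightarrow> 0) sequentially" by real_asymp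
    show "((\<lambda>d::nat.
            measure (joint_law f H (l * real d) d)
              {p \<in> space (joint_law f H (l * real d) d).
                 \<bar>(l * real d) * (\<Sum>i<d. Rem f (snd p i) - Rem f (fst p i))\<bar> > \<epsilon>})
          \<longlongrightarrow> 0) sequentially"
      by (rule tendsto_sandwich[OF _ _ tendsto_const lim])
         (auto intro!: eventually_sequentiallyI[of D0] bnd)
  qed
qed


end
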